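(* Let $\mathcal{L}$ be a countable language, let $\phi$ be an $\mathcal{L}_{\omega_1,\omega}$-sentence and let $\alpha<\omega_1$. Assume that for every $\gamma<\alpha$ the set $\Psi_\gamma(\phi)$ is countable (so that $X_\alpha(\phi)$ is a standard Borel space). Then (1) the function $Mod(\phi)\times\omega^{<\omega}\to X_\alpha(\phi)$ given by $(\mathcal{M},\vec a)\mapsto \phi^{\vec a,\mathcal{M}}_\alpha$ is Borel, and (2) $\Psi_\alpha(\phi)$ and $\Phi_\alpha(\phi)$ are $\mathbf{\Sigma}^1_1$ subsets of $X_\alpha(\phi)$.
   Context: $\mathcal{L}_{\omega_1,\omega}$ is the infinitary logic over $\mathcal{L}$ with countable conjunctions/disjunctions and finite quantifier strings. $Mod(\mathcal{L})$ is the set of $\mathcal{L}$-structures with universe $\mathbb{N}$, with the topology whose basic open sets are $\{M\in Mod(\mathcal{L}) \mid M\models\varphi(n_1,\dots,n_m)\}$ for quantifier-free $\varphi$ and $n_1,\dots,n_m\in\mathbb{N}$; it is Polish. For a sentence $\sigma$, $Mod(\sigma)$ is the set of members of $Mod(\mathcal{L})$ satisfying $\sigma$, a standard Borel space with the inherited Borel structure. Elements of $\omega^{<\omega}$ are finite tuples $\vec a$ of elements of $\mathbb{N}$. $\alpha$-types: for a countable structure $\mathcal{M}$ and a finite tuple $\vec a$ from $\mathcal{M}$ (with $\vec x$ a tuple of variables of the same length), define formulas by recursion: $\phi^{\vec a,\mathcal{M}}_0(\vec x)=\bigwedge\{\psi(\vec x)\mid \psi$ atomic or negated atomic, $\mathcal{M}\models\psi(\vec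 a)\}$; $\phi^{\vec a,\mathcal{M}}_{\alpha+1}=\phi^{\vec a,\mathcal{M}}_\alpha\wedge\bigwedge\{\exists\vec y\,\phi^{\vec a\frown\vec b,\mathcal{M}}_\alpha(\vec x,\vec y)\mid \vec b$ a finite tuple from $\mathcal{M}\}\wedge\bigwedge_n\forall y_0\dots y_n\bigvee\{\phi^{\vec a\frown\vec b,\mathcal{M}}_\alpha(\vec x,y_0,\dots,y_n)\mid\vec b\in\mathcal{M}^{n+1}\}$; $\phi^{\vec a,\mathcal{M}}_\lambda=\bigwedge_{\alpha<\lambda}\phi^{\vec a,\mathcal{M}}_\alpha$ for limit $\lambda$. Formulas are compared syntactically. $\Psi_\alpha(\phi)=\{\phi^{\vec a,\mathcal{M}}_\alpha\mid \mathcal{M}$ countable, $\mathcal{M}\models\phi$, $\vec a$ a tuple from $\mathcal{M}\}$ and $\Phi_\alpha(\phi)=\{\phi^{\emptyset,\mathcal{M}}_\alpha\mid \mathcal{M}$ countable, $\mathcal{M}\models\phi\}$. The space $X_\alpha(\phi)$: for $\alpha=0$, $X_0(\phi)=2^A$ where $A$ is the (countable) set of atomic and negated atomic formulas, and $\phi^{\vec a,\mathcal{M}}_0$ is identified with $\{\psi\in A\mid\mathcal{M}\models\psi(\vec a)\}$; for $\alpha=\gamma+1$, $X_\alpha(\phi)=2^{\Psi_\gamma(\phi)}$ and $\phi^{\vec a,\mathcal{M}}_{\gamma+1}$ is identified with $\{\phi^{\vec a\frown\vec b,\mathcal{M}}_\gamma\mid\vec b$ a finite tuple from $\mathcal{M}\}$;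 for $\alpha$ limit, $X_\alpha(\phi)=2^{\bigcup_{\gamma<\alpha}\Psi_\gamma(\phi)}$ and $\phi^{\vec a,\mathcal{M}}_\alpha$ is identified with $\{\phi^{\vec a,\mathcal{M}}_\gamma\mid\gamma<\alpha\}$. Via these identifications $\Psi_\alpha(\phi),\Phi_\alpha(\phi)\subseteq X_\alpha(\phi)$; when the index set is countable, $X_\alpha(\phi)$ carries the product (Cantor) topology and is a standard Borel space. *)

theory Defs
  imports "HOL-Analysis.Analysis" "HOL-Probability.Probability" "HOL-Library.Countable_Set_Type"
begin

record lang =
  fsym :: "nat \<Rightarrow> nat option"   \<comment> \<open>Some n: function symbol of arity n (n = 0: constant)\<close>
  rsym :: "nat \<Rightarrow> nat option"   \<comment> \<open>Some n: relation symbol of arity n\<close>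

datatype trm = Var nat | App nat "trm list"

fun wf_trm :: "lang \<Rightarrow> trm \<Rightarrow> bool" where
  "wf_trm L (Var i) = True"
| "wf_trm L (App f ts) = (fsym L f = Some (length ts) \<and> (\<forall>t\<in>set ts. wf_trm L t))"

fun tvars :: "trm \<Rightarrow> nat set" where
  "tvars (Var i) = {i}"
| "tvars (App f ts) = (\<Union>t\<in>set ts. tvars t)"

datatype form =
    FEq trm trm
  | FRel nat "trm list"
  | FNeg form
  | FConj "form cset"
  | FDisj "form cset"
  | FEx nat form
  | FAll nat form

primrec wf_form :: "lang \<Rightarrow> form \<Rightarrow> bool" where
  "wf_form L (FEq s t) = (wf_trm L s \<and> wf_trm L t)"
| "wf_form L (FRel R ts) = (rsym L R = Some (length ts) \<and> (\<forall>t\<in>set ts. wf_trm L t))"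
| "wf_form L (FNeg p) = wf_form L p"
| "wf_form L (FConj S) = (\<forall>b\<in>rcset (cimage (wf_form L) S). b)"
| "wf_form L (FDisj S) = (\<forall>b\<in>rcset (cimage (wf_form L) S). b)"
| "wf_form L (FEx i p) = wf_form L p"
| "wf_form L (FAll i p) = wf_form L p"

primrec fv :: "form \<Rightarrow> nat set" where
  "fv (FEq s t) = tvars s \<union> tvars t"
| "fv (FRel R ts) = (\<Union>t\<in>set ts. tvars t)"
| "fv (FNeg p) = fv p"
| "fv (FConj S) = \<Union> (rcset (cimage fv S))"
| "fv (FDisj S) = \<Union> (rcset (cimage fv S))"
| "fv (FEx i p) = fv p - {i}"
| "fv (FAll i p) = fv p - {i}"

primrec qf_fin :: "form \<Rightarrow> bool" where
  "qf_fin (FEq s t) = True"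
| "qf_fin (FRel R ts) = True"
| "qf_fin (FNeg p) = qf_fin p"
| "qf_fin (FConj S) = (finite (rcset S) \<and> (\<forall>b\<in>rcset (cimage qf_fin S). b))"
| "qf_fin (FDisj S) = (finite (rcset S) \<and> (\<forall>b\<in>rcset (cimage qf_fin S). b))"
| "qf_fin (FEx i p) = False"
| "qf_fin (FAll i p) = False"

definition is_sentence :: "lang \<Rightarrow> form \<Rightarrow> bool" where
  "is_sentence L p \<longleftrightarrow> wf_form L p \<and> fv p = {}"

definition atomic_L :: "lang \<Rightarrow> form set" where
  "atomic_L L = {FEq s t |s t. wf_trm L s \<and> wf_trm L t}
     \<union> {FRel R ts |R ts. rsym L R = Some (length ts) \<and> (\<forall>t\<in>set ts. wf_trm L t)}"

definition Atoms :: "lang \<Rightarrow> form set" where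
  "Atoms L = atomic_L L \<union> FNeg ` atomic_L L"

record struc =
  univ :: "nat set"
  fint :: "nat \<Rightarrow> nat list \<Rightarrow> nat"
  rint :: "nat \<Rightarrow> nat list \<Rightarrow> bool"

text \<open>L-structures, with a canonical (junk-free) representation outside the intended domain.\<close>
definition is_struc :: "lang \<Rightarrow> struc \<Rightarrow> bool" where
  "is_struc L M \<longleftrightarrow> univ M \<noteq> {}
     \<and> (\<forall>f xs. fsym L f = Some (length xs) \<and> set xs \<subseteq> univ M \<longrightarrow> fint M f xs \<in> univ M)
     \<and> (\<forall>f xs. \<not> (fsym L f = Some (length xs) \<and> set xs \<subseteq> univ M) \<longrightarrow> fint M f xs = 0)
     \<and> (\<forall>R xs. \<not> (rsym L R = Some (length xs) \<and> set xs \<subseteq> univ M) \<longrightarrow> \<not> rint M R xs)"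

fun eval :: "struc \<Rightarrow> (nat \<Rightarrow> nat) \<Rightarrow> trm \<Rightarrow> nat" where
  "eval M v (Var i) = v i"
| "eval M v (App f ts) = fint M f (map (eval M v) ts)"

primrec sat :: "struc \<Rightarrow> form \<Rightarrow> (nat \<Rightarrow> nat) \<Rightarrow> bool" where
  "sat M (FEq s t) = (\<lambda>v. eval M v s = eval M v t)"
| "sat M (FRel R ts) = (\<lambda>v. rint M R (map (eval M v) ts))"
| "sat M (FNeg p) = (\<lambda>v. \<not> sat M p v)"
| "sat M (FConj S) = (\<lambda>v. \<forall>g\<in>rcset (cimage (sat M) S). g v)"
| "sat M (FDisj S) = (\<lambda>v. \<exists>g\<in>rcset (cimage (sat M) S). g v)"
| "sat M (FEx i p) = (\<lambda>v. \<exists>u\<in>univ M. sat M p (v(i := u)))"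
| "sat M (FAll i p) = (\<lambda>v. \<forall>u\<in>univ M. sat M p (v(i := u)))"

definition sat_tuple :: "struc \<Rightarrow> form \<Rightarrow> nat list \<Rightarrow> bool" where
  "sat_tuple M p a = sat M p (\<lambda>i. a ! i)"

definition ModL :: "lang \<Rightarrow> struc set" where
  "ModL L = {M. is_struc L M \<and> univ M = UNIV}"

definition basic_open :: "lang \<Rightarrow> struc set set" where
  "basic_open L = {{M \<in> ModL L. sat_tuple M p ns} |p ns.
      qf_fin p \<and> wf_form L p \<and> fv p \<subseteq> {..<length ns}}"

text \<open>The basis is countable, so the Borel sets of Mod(L) are exactly the
  sigma-algebra generated by the basic open sets.\<close>
definition ModL_M :: "lang \<Rightarrow> struc measure" where
  "ModL_M L = sigma (ModL L) (basic_open L)"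

definition Mod_phi :: "lang \<Rightarrow> form \<Rightarrow> struc set" where
  "Mod_phi L p = {M \<in> ModL L. sat M p (\<lambda>_. 0)}"

definition Mod_phi_M :: "lang \<Rightarrow> form \<Rightarrow> struc measure" where
  "Mod_phi_M L p = restrict_space (ModL_M L) (Mod_phi L p)"

section \<open>Countable ordinals: alpha is the order type of the strict initial
  segment below an element x of a well-order r on a subset of nat\<close>

definition below :: "nat rel \<Rightarrow> nat \<Rightarrow> nat set" where
  "below r x = {y. (y, x) \<in> r \<and> y \<noteq> x}"

definition is_ipred :: "nat rel \<Rightarrow> nat \<Rightarrow> nat \<Rightarrow> bool" where
  "is_ipred r x y \<longleftrightarrow> y \<in> below r x \<and> (\<forall>z\<in>below r x. (z, y) \<in> r)"

fun Exs :: "nat \<Rightarrow> nat \<Rightarrow> form \<Rightarrow> form" where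
  "Exs k 0 p = p"
| "Exs k (Suc m) p = FEx k (Exs (Suc k) m p)"

fun Alls :: "nat \<Rightarrow> nat \<Rightarrow> form \<Rightarrow> form" where
  "Alls k 0 p = p"
| "Alls k (Suc m) p = FAll k (Alls (Suc k) m p)"

definition atoms_true :: "lang \<Rightarrow> struc \<Rightarrow> nat list \<Rightarrow> form set" where
  "atoms_true L M a = {p \<in> Atoms L. fv p \<subseteq> {..<length a} \<and> sat_tuple M p a}"

definition succ_form :: "(struc \<Rightarrow> nat list \<Rightarrow> form) \<Rightarrow> struc \<Rightarrow> nat list \<Rightarrow> form" where
  "succ_form q M a = FConj (acset {
      q M a,
      FConj (acset {Exs (length a) (length b) (q M (a @ b)) |b. set b \<subseteq> univ M}),
      FConj (acset (range (\<lambda>n. Alls (length a) (Suc n)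
         (FDisj (acset {q M (a @ b) |b. length b = Suc n \<and> set b \<subseteq> univ M})))))})"

definition phiF :: "lang \<Rightarrow> nat rel \<Rightarrow> (nat \<Rightarrow> struc \<Rightarrow> nat list \<Rightarrow> form)
    \<Rightarrow> nat \<Rightarrow> struc \<Rightarrow> nat list \<Rightarrow> form" where
  "phiF L r rec x = (\<lambda>M a.
     if below r x = {} then FConj (acset (atoms_true L M a))
     else if (\<exists>y. is_ipred r x y) then succ_form (rec (SOME y. is_ipred r x y)) M a
     else FConj (acset {rec y M a |y. y \<in> below r x}))"

text \<open>phi_type L r x M a is the formula phi^{a,M}_alpha, alpha = order type of below r x.\<close>
definition phi_type :: "lang \<Rightarrow> nat rel \<Rightarrow> nat \<Rightarrow> struc \<Rightarrow> nat list \<Rightarrow> form" where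
  "phi_type L r = wfrec (r - Id) (phiF L r)"

definition Psi :: "lang \<Rightarrow> nat rel \<Rightarrow> nat \<Rightarrow> form \<Rightarrow> form set" where
  "Psi L r x p = {phi_type L r x M a |M a. is_struc L M \<and> sat M p (\<lambda>_. 0) \<and> set a \<subseteq> univ M}"

definition Phi :: "lang \<Rightarrow> nat rel \<Rightarrow> nat \<Rightarrow> form \<Rightarrow> form set" where
  "Phi L r x p = {phi_type L r x M [] |M. is_struc L M \<and> sat M p (\<lambda>_. 0)}"

definition Xindex :: "lang \<Rightarrow> nat rel \<Rightarrow> nat \<Rightarrow> form \<Rightarrow> form set" where
  "Xindex L r x p =
     (if below r x = {} then Atoms L
      else if (\<exists>y. is_ipred r x y) then Psi L r (SOME y. is_ipred r x y) p
      else (\<Union>y\<in>below r x. Psi L r y p))"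

text \<open>2^I with the Borel structure of the Cantor (product) topology, I countable:
  generated by the subbasic clopen sets {S. i \<in> S}.\<close>
definition Xspace :: "lang \<Rightarrow> nat rel \<Rightarrow> nat \<Rightarrow> form \<Rightarrow> form set measure" where
  "Xspace L r x p = sigma (Pow (Xindex L r x p))
      {{S \<in> Pow (Xindex L r x p). i \<in> S} |i. i \<in> Xindex L r x p}"

text \<open>The element of X_alpha identified with phi^{a,M}_alpha.\<close>
definition code :: "lang \<Rightarrow> nat rel \<Rightarrow> nat \<Rightarrow> struc \<Rightarrow> nat list \<Rightarrow> form set" where
  "code L r x M a =
     (if below r x = {} then atoms_true L M a
      else if (\<exists>y. is_ipred r x y) then
        {phi_type L r (SOME y. is_ipred r x y) M (a @ b) |b. set b \<subseteq> univ M}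
      else {phi_type L r y M a |y. y \<in> below r x})"

definition PsiX :: "lang \<Rightarrow> nat rel \<Rightarrow> nat \<Rightarrow> form \<Rightarrow> form set set" where
  "PsiX L r x p = {code L r x M a |M a. is_struc L M \<and> sat M p (\<lambda>_. 0) \<and> set a \<subseteq> univ M}"

definition PhiX :: "lang \<Rightarrow> nat rel \<Rightarrow> nat \<Rightarrow> form \<Rightarrow> form set set" where
  "PhiX L r x p = {code L r x M [] |M. is_struc L M \<and> sat M p (\<lambda>_. 0)}"

definition baire :: "(nat \<Rightarrow> nat) measure" where
  "baire = (\<Pi>\<^sub>M i\<in>(UNIV::nat set). count_space (UNIV::nat set))"

definition analytic :: "'a measure \<Rightarrow> 'a set \<Rightarrow> bool" where
  "analytic X S \<longleftrightarrow> S \<subseteq> space X \<and> (\<exists>B\<in>sets (X \<Otimes>\<^sub>M baire). S = fst ` B)"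

end

theory Submission imports Defs begin

instance trm :: countable by countable_datatype

lemma pred_constI: "Measurable.pred N (\<lambda>_. P)"
  by (cases P) (simp_all add: pred_def)

lemma pred_Ball:
  assumes "countable X" "\<And>i. i \<in> X \<Longrightarrow> Measurable.pred N (P i)"
  shows "Measurable.pred N (\<lambda>\<omega>. \<forall>i\<in>X. P i \<omega>)"
proof (cases "X = {}")
  case True then show ?thesis by (simp add: pred_constI)
next
  case False
  have "{\<omega> \<in> space N. \<forall>i\<in>X. P i \<omega>} = (\<Inter>i\<in>X. {\<omega> \<in> space N. P i \<omega>})"
    using False by auto
  moreover have "(\<Inter>i\<in>X. {\<omega> \<in> space N. P i \<omega>}) \<in> sets N"
    using assms False by (intro sets.countable_INT') (auto simp: pred_def)
  ultimately show ?thesis by (simp add: pred_def)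
qed

lemma pred_Bex:
  assumes "countable X" "\<And>i. i \<in> X \<Longrightarrow> Measurable.pred N (P i)"
  shows "Measurable.pred N (\<lambda>\<omega>. \<exists>i\<in>X. P i \<omega>)"
proof -
  have "{\<omega> \<in> space N. \<exists>i\<in>X. P i \<omega>} = (\<Union>i\<in>X. {\<omega> \<in> space N. P i \<omega>})"
    by auto
  moreover have "(\<Union>i\<in>X. {\<omega> \<in> space N. P i \<omega>}) \<in> sets N"
    using assms by (intro sets.countable_UN') (auto simp: pred_def)
  ultimately show ?thesis by (simp add: pred_def)
qed

lemma pred_conj: "Measurable.pred N A \<Longrightarrow> Measurable.pred N B \<Longrightarrow> Measurable.pred N (\<lambda>\<omega>. A \<omega> \<and> B \<omega>)"
  by (rule pred_intros_logic)
lemma pred_imp: "Measurable.pred N A \<Longrightarrow> Measurable.pred N B \<Longrightarrow> Measurable.pred N (\<lambda>\<omega>. A \<omega> \<longrightarrow> B \<omega>)"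
  by (rule pred_intros_logic)

definition fib :: "'m measure \<Rightarrow> ('m \<Rightarrow> 'b) \<Rightarrow> bool" where
  "fib N g \<longleftrightarrow> (\<forall>c. Measurable.pred N (\<lambda>\<omega>. g \<omega> = c))"

lemma fib_const: "fib N (\<lambda>_. k)"
  unfolding fib_def by (simp add: pred_constI)

lemma fib_inj:
  assumes "inj h" "fib N g"
  shows "fib N (\<lambda>\<omega>. h (g \<omega>))"
  unfolding fib_def
proof
  fix c
  have "(\<lambda>\<omega>. h (g \<omega>) = c) = (\<lambda>\<omega>. c \<in> range h \<and> g \<omega> = inv h c)"
    using assms(1) by (auto simp: fun_eq_iff)
  moreover have "Measurable.pred N (\<lambda>\<omega>. c \<in> range h \<and> g \<omega> = inv h c)"
    using assms(2) unfolding fib_def by (intro pred_conj[OF pred_constI]) auto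
  ultimately show "Measurable.pred N (\<lambda>\<omega>. h (g \<omega>) = c)" by simp
qed

lemma fib_acset:
  assumes "fib N G" "\<And>\<omega>. countable (G \<omega>)"
  shows "fib N (\<lambda>\<omega>. acset (G \<omega>))"
  unfolding fib_def
proof
  fix c
  have "(\<lambda>\<omega>. acset (G \<omega>) = c) = (\<lambda>\<omega>. G \<omega> = rcset c)"
    using assms(2) by (auto simp: fun_eq_iff acset_inverse rcset_inverse)
  then show "Measurable.pred N (\<lambda>\<omega>. acset (G \<omega>) = c)"
    using assms(1) unfolding fib_def by simp
qed

lemma fib_setformer:
  assumes I: "countable I" and g: "\<And>b. b \<in> I \<Longrightarrow> fib N (g b)"
    and P: "\<And>b. b \<in> I \<Longrightarrow> Measurable.pred N (P b)"
  shows "fib N (\<lambda>\<omega>. {g b \<omega> |b. b \<in> I \<and> P b \<omega>})"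
  unfolding fib_def
proof
  fix T
  show "Measurable.pred N (\<lambda>\<omega>. {g b \<omega> |b. b \<in> I \<and> P b \<omega>} = T)"
  proof (cases "countable T")
    case True
    have "(\<lambda>\<omega>. {g b \<omega> |b. b \<in> I \<and> P b \<omega>} = T) =
      (\<lambda>\<omega>. (\<forall>b\<in>I. P b \<omega> \<longrightarrow> (\<exists>t\<in>T. g b \<omega> = t)) \<and> (\<forall>t\<in>T. \<exists>b\<in>I. P b \<omega> \<and> g b \<omega> = t))"
    proof (rule ext, rule iffI)
      fix \<omega> assume "{g b \<omega> |b. b \<in> I \<and> P b \<omega>} = T"
      then show "(\<forall>b\<in>I. P b \<omega> \<longrightarrow> (\<exists>t\<in>T. g b \<omega> = t)) \<and> (\<forall>t\<in>T. \<exists>b\<in>I. P b \<omega> \<and> g b \<omega> = t)"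
        by blast
    next
      fix \<omega> assume H: "(\<forall>b\<in>I. P b \<omega> \<longrightarrow> (\<exists>t\<in>T. g b \<omega> = t)) \<and> (\<forall>t\<in>T. \<exists>b\<in>I. P b \<omega> \<and> g b \<omega> = t)"
      show "{g b \<omega> |b. b \<in> I \<and> P b \<omega>} = T"
      proof (rule set_eqI, rule iffI)
        fix t assume "t \<in> {g b \<omega> |b. b \<in> I \<and> P b \<omega>}"
        then show "t \<in> T" using H by blast
      next
        fix t assume "t \<in> T"
        then obtain b where "b \<in> I" "P b \<omega>" "g b \<omega> = t" using H by blast
        then show "t \<in> {g b \<omega> |b. b \<in> I \<and> P b \<omega>}" by blast
      qed
    qed
    moreover have "Measurable.pred N (\<lambda>\<omega>. (\<forall>b\<in>I. P b \<omega> \<longrightarrow> (\<exists>t\<in>T. g b \<omega> = t)) \<and> (\<forall>t\<in>T. \<exists>b\<in>I. P b \<omega> \<and> g b \<omega> = t))"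
    proof (rule pred_conj)
      show "Measurable.pred N (\<lambda>\<omega>. \<forall>b\<in>I. P b \<omega> \<longrightarrow> (\<exists>t\<in>T. g b \<omega> = t))"
      proof (rule pred_Ball[OF I])
        fix b assume b: "b \<in> I"
        show "Measurable.pred N (\<lambda>\<omega>. P b \<omega> \<longrightarrow> (\<exists>t\<in>T. g b \<omega> = t))"
          by (rule pred_imp[OF P[OF b] pred_Bex[OF True]]) (use g[OF b] in \<open>simp add: fib_def\<close>)
      qed
      show "Measurable.pred N (\<lambda>\<omega>. \<forall>t\<in>T. \<exists>b\<in>I. P b \<omega> \<and> g b \<omega> = t)"
      proof (rule pred_Ball[OF True])
        fix t assume t: "t \<in> T"
        show "Measurable.pred N (\<lambda>\<omega>. \<exists>b\<in>I. P b \<omega> \<and> g b \<omega> = t)"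
          by (rule pred_Bex[OF I], rule pred_conj) (use g P in \<open>auto simp add: fib_def\<close>)
      qed
    qed
    ultimately show ?thesis by simp
  next
    case False
    have "\<And>\<omega>. {g b \<omega> |b. b \<in> I \<and> P b \<omega>} \<noteq> T"
    proof
      fix \<omega> assume "{g b \<omega> |b. b \<in> I \<and> P b \<omega>} = T"
      moreover have "{g b \<omega> |b. b \<in> I \<and> P b \<omega>} \<subseteq> (\<lambda>b. g b \<omega>) ` I" by auto
      moreover have "countable ((\<lambda>b. g b \<omega>) ` I)" using I by simp
      ultimately have "countable T" by (metis countable_subset)
      then show False using False by simp
    qed
    then show ?thesis by (simp add: pred_constI)
  qed
qed


lemma wf_r: "Well_order r \<Longrightarrow> wf (r - Id)"
  by (simp add: well_order_on_def)

lemma phi_type_unfold: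
  assumes "Well_order r"
  shows "phi_type L r y = phiF L r (phi_type L r) y"
proof -
  have "phi_type L r y = phiF L r (cut (phi_type L r) (r - Id) y) y"
    unfolding phi_type_def by (rule wfrec[OF wf_r[OF assms]])
  also have "\<dots> = phiF L r (phi_type L r) y"
  proof -
    have cutb: "\<And>z. z \<in> below r y \<Longrightarrow> cut (phi_type L r) (r - Id) y z = phi_type L r z"
      by (rule cut_apply) (auto simp: below_def)
    have sb: "(\<exists>z. is_ipred r y z) \<Longrightarrow> (SOME z. is_ipred r y z) \<in> below r y"
      by (metis is_ipred_def someI)
    have e: "\<And>M a. {cut (phi_type L r) (r - Id) y z M a |z. z \<in> below r y} = {phi_type L r z M a |z. z \<in> below r y}"
      using cutb by force
    show ?thesis unfolding phiF_def using sb cutb e by (auto intro!: ext)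
  qed
  finally show ?thesis .
qed

lemma inj_Exs: "inj (Exs k m)"
proof (induction m arbitrary: k)
  case 0 then show ?case by simp
next
  case (Suc m) then show ?case by (simp add: inj_def)
qed

lemma inj_Alls: "inj (Alls k m)"
proof (induction m arbitrary: k)
  case 0 then show ?case by simp
next
  case (Suc m) then show ?case by (simp add: inj_def)
qed

lemma pred_set_sub:
  assumes "\<And>n. Measurable.pred N (\<lambda>\<omega>. n \<in> U \<omega>)"
  shows "Measurable.pred N (\<lambda>\<omega>. set b \<subseteq> U \<omega>)"
proof -
  have "(\<lambda>\<omega>. set b \<subseteq> U \<omega>) = (\<lambda>\<omega>. \<forall>n\<in>set b. n \<in> U \<omega>)" by auto
  then show ?thesis using assms by (simp add: pred_intros_countable_bounded)
qed

lemma fib_FConj: "fib N G \<Longrightarrow> (\<And>\<omega>. countable (G \<omega>)) \<Longrightarrow> fib N (\<lambda>\<omega>. FConj (acset (G \<omega>)))"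
  using fib_inj[of FConj N "\<lambda>\<omega>. acset (G \<omega>)"] fib_acset[of N G] by (simp add: inj_def)
lemma fib_FDisj: "fib N G \<Longrightarrow> (\<And>\<omega>. countable (G \<omega>)) \<Longrightarrow> fib N (\<lambda>\<omega>. FDisj (acset (G \<omega>)))"
  using fib_inj[of FDisj N "\<lambda>\<omega>. acset (G \<omega>)"] fib_acset[of N G] by (simp add: inj_def)
lemma fib_Exs: "fib N g \<Longrightarrow> fib N (\<lambda>\<omega>. Exs k m (g \<omega>))"
  using fib_inj[OF inj_Exs] .
lemma fib_Alls: "fib N g \<Longrightarrow> fib N (\<lambda>\<omega>. Alls k m (g \<omega>))"
  using fib_inj[OF inj_Alls] .
lemma countable_img: "countable {g b |b. P b}" if "countable (UNIV :: 'i::countable set)" for g :: "'i::countable \<Rightarrow> 'x"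
proof -
  have "{g b |b. P b} \<subseteq> range g" by auto
  then show ?thesis by (rule countable_subset) simp
qed

lemma pred_conj_const: "(P \<Longrightarrow> Measurable.pred N Q) \<Longrightarrow> Measurable.pred N (\<lambda>\<omega>. P \<and> Q \<omega>)"
  by (cases P) (simp_all add: pred_constI)

lemma fib_phi:
  assumes WO: "Well_order r" and cA: "countable (Atoms L)"
   and H2: "\<And>q a. q \<in> Atoms L \<Longrightarrow> fv q \<subseteq> {..<length a} \<Longrightarrow> Measurable.pred N (\<lambda>\<omega>. sat_tuple (S \<omega>) q a)"
   and H3: "\<And>n. Measurable.pred N (\<lambda>\<omega>. n \<in> univ (S \<omega>))"
  shows "fib N (\<lambda>\<omega>. phi_type L r y (S \<omega>) a)"
proof (induction y arbitrary: a rule: wf_induct[OF wf_r[OF WO]])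
  case (1 y)
  have IH: "\<And>z a. z \<in> below r y \<Longrightarrow> fib N (\<lambda>\<omega>. phi_type L r z (S \<omega>) a)"
    using 1 by (auto simp: below_def)
  have Pset: "\<And>b. Measurable.pred N (\<lambda>\<omega>. set b \<subseteq> univ (S \<omega>))"
    by (rule pred_set_sub[OF H3])
  show ?case
  proof (cases "below r y = {}")
    case True
    have eq: "(\<lambda>\<omega>. phi_type L r y (S \<omega>) a) = (\<lambda>\<omega>. FConj (acset {(\<lambda>q \<omega>. q) q \<omega> | q. q \<in> Atoms L \<and> (fv q \<subseteq> {..<length a} \<and> sat_tuple (S \<omega>) q a)}))"
      by (subst phi_type_unfold[OF WO]) (simp add: phiF_def True atoms_true_def)
    have "fib N (\<lambda>\<omega>. {(\<lambda>q \<omega>. q) q \<omega> | q. q \<in> Atoms L \<and> (fv q \<subseteq> {..<length a} \<and> sat_tuple (S \<omega>) q a)})"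
      apply (rule fib_setformer)
        apply (rule cA)
       apply (rule fib_const)
      apply (rule pred_conj_const, erule H2, assumption)
      done
    then have "fib N (\<lambda>\<omega>. FConj (acset {(\<lambda>q \<omega>. q) q \<omega> | q. q \<in> Atoms L \<and> (fv q \<subseteq> {..<length a} \<and> sat_tuple (S \<omega>) q a)}))"
      by (rule fib_FConj) (auto intro: countable_subset[OF _ cA])
    then show ?thesis using eq by simp
  next
    case nb: False
    show ?thesis
    proof (cases "\<exists>z. is_ipred r y z")
      case True
      define y0 where "y0 = (SOME z. is_ipred r y z)"
      have y0b: "y0 \<in> below r y" unfolding y0_def by (metis True is_ipred_def someI)
      have IH0: "\<And>a. fib N (\<lambda>\<omega>. phi_type L r y0 (S \<omega>) a)" using IH y0b by blast
      define q where "q = phi_type L r y0"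
      have eq: "(\<lambda>\<omega>. phi_type L r y (S \<omega>) a) = (\<lambda>\<omega>. succ_form q (S \<omega>) a)"
        by (subst phi_type_unfold[OF WO]) (simp add: phiF_def nb True y0_def q_def)
      have X1: "fib N (\<lambda>\<omega>. {(\<lambda>b \<omega>. Exs (length a) (length b) (q (S \<omega>) (a @ b))) b \<omega> |b. b \<in> UNIV \<and> set b \<subseteq> univ (S \<omega>)})"
        apply (rule fib_setformer)
          apply simp
         apply (rule fib_Exs) using IH0 apply (simp add: q_def)
        apply (rule Pset)
        done
      have Y: "\<And>n. fib N (\<lambda>\<omega>. {(\<lambda>b \<omega>. q (S \<omega>) (a @ b)) b \<omega> |b. b \<in> UNIV \<and> (length b = Suc n \<and> set b \<subseteq> univ (S \<omega>))})"
        apply (rule fib_setformer)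
          apply simp
         using IH0 apply (simp add: q_def)
        apply (rule pred_conj, rule pred_constI, rule Pset)
        done
      have X2: "fib N (\<lambda>\<omega>. {(\<lambda>n \<omega>. Alls (length a) (Suc n) (FDisj (acset {(\<lambda>b \<omega>. q (S \<omega>) (a @ b)) b \<omega> |b. b \<in> UNIV \<and> (length b = Suc n \<and> set b \<subseteq> univ (S \<omega>))}))) n \<omega> |n. n \<in> UNIV \<and> True})"
        apply (rule fib_setformer)
          apply simp
         apply (rule fib_Alls, rule fib_FDisj, rule Y, rule countable_img, simp)
        apply (rule pred_constI)
        done
      define G where "G = (\<lambda>k::nat. \<lambda>\<omega>. [q (S \<omega>) a,
        FConj (acset {(\<lambda>b \<omega>. Exs (length a) (length b) (q (S \<omega>) (a @ b))) b \<omega> |b. b \<in> UNIV \<and> set b \<subseteq> univ (S \<omega>)}),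
        FConj (acset {(\<lambda>n \<omega>. Alls (length a) (Suc n) (FDisj (acset {(\<lambda>b \<omega>. q (S \<omega>) (a @ b)) b \<omega> |b. b \<in> UNIV \<and> (length b = Suc n \<and> set b \<subseteq> univ (S \<omega>))}))) n \<omega> |n. n \<in> UNIV \<and> True})] ! k)"
      have G: "\<And>k. k \<in> {0,1,2} \<Longrightarrow> fib N (G k)"
      proof -
        fix k :: nat assume "k \<in> {0,1,2}"
        then consider "k = 0" | "k = 1" | "k = 2" by auto
        then show "fib N (G k)"
        proof cases
          case 1 then show ?thesis using IH0 by (simp add: G_def q_def)
        next
          case 2
          have "fib N (\<lambda>\<omega>. FConj (acset {(\<lambda>b \<omega>. Exs (length a) (length b) (q (S \<omega>) (a @ b))) b \<omega> |b. b \<in> UNIV \<and> set b \<subseteq> univ (S \<omega>)}))"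
            by (rule fib_FConj, rule X1, rule countable_img, simp)
          then show ?thesis using 2 unfolding G_def by simp
        next
          case 3
          have "fib N (\<lambda>\<omega>. FConj (acset {(\<lambda>n \<omega>. Alls (length a) (Suc n) (FDisj (acset {(\<lambda>b \<omega>. q (S \<omega>) (a @ b)) b \<omega> |b. b \<in> UNIV \<and> (length b = Suc n \<and> set b \<subseteq> univ (S \<omega>))}))) n \<omega> |n. n \<in> UNIV \<and> True}))"
            by (rule fib_FConj, rule X2, rule countable_img, simp)
          then show ?thesis using 3 unfolding G_def by simp
        qed
      qed
      have "fib N (\<lambda>\<omega>. FConj (acset {G k \<omega> |k. k \<in> {0,1,2} \<and> True}))"
        apply (rule fib_FConj)
         apply (rule fib_setformer)
           apply simp
          apply (erule G)
         apply (rule pred_constI)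
        apply (rule countable_img, simp)
        done
      moreover have "(\<lambda>\<omega>. FConj (acset {G k \<omega> |k. k \<in> {0,1,2} \<and> True})) = (\<lambda>\<omega>. succ_form q (S \<omega>) a)"
      proof
        fix \<omega>
        have "{G k \<omega> |k. k \<in> {0,1,2} \<and> True} = {G 0 \<omega>, G 1 \<omega>, G 2 \<omega>}" by auto
        then show "FConj (acset {G k \<omega> |k. k \<in> {0,1,2} \<and> True}) = succ_form q (S \<omega>) a"
          unfolding succ_form_def by (simp add: G_def full_SetCompr_eq)
      qed
      ultimately show ?thesis using eq by simp
    next
      case False
      have eq: "(\<lambda>\<omega>. phi_type L r y (S \<omega>) a) = (\<lambda>\<omega>. FConj (acset {(\<lambda>z \<omega>. phi_type L r z (S \<omega>) a) z \<omega> |z. z \<in> below r y \<and> True}))"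
        by (subst phi_type_unfold[OF WO]) (simp add: phiF_def nb False)
      have "fib N (\<lambda>\<omega>. FConj (acset {(\<lambda>z \<omega>. phi_type L r z (S \<omega>) a) z \<omega> |z. z \<in> below r y \<and> True}))"
        apply (rule fib_FConj)
         apply (rule fib_setformer)
           apply (rule countableI_type)
          apply (erule IH)
         apply (rule pred_constI)
        apply (rule countable_img, simp)
        done
      then show ?thesis using eq by simp
    qed
  qed
qed


lemma codepred:
  assumes WO: "Well_order r" and cA: "countable (Atoms L)"
   and H2: "\<And>q a. q \<in> Atoms L \<Longrightarrow> fv q \<subseteq> {..<length a} \<Longrightarrow> Measurable.pred N (\<lambda>\<omega>. sat_tuple (S \<omega>) q a)"
   and H3: "\<And>n. Measurable.pred N (\<lambda>\<omega>. n \<in> univ (S \<omega>))"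
  shows "Measurable.pred N (\<lambda>\<omega>. i \<in> code L r y (S \<omega>) a)"
proof -
  note F = fib_phi[OF WO cA H2 H3, unfolded fib_def]
  show ?thesis
  proof (cases "below r y = {}")
    case True
    have eq: "(\<lambda>\<omega>. i \<in> code L r y (S \<omega>) a) = (\<lambda>\<omega>. (i \<in> Atoms L \<and> fv i \<subseteq> {..<length a}) \<and> sat_tuple (S \<omega>) i a)"
      by (simp add: code_def True atoms_true_def)
    show ?thesis unfolding eq by (rule pred_conj_const) (use H2 in blast)
  next
    case nb: False
    show ?thesis
    proof (cases "\<exists>z. is_ipred r y z")
      case True
      have eq: "(\<lambda>\<omega>. i \<in> code L r y (S \<omega>) a) = (\<lambda>\<omega>. \<exists>b\<in>UNIV. set b \<subseteq> univ (S \<omega>) \<and> phi_type L r (SOME z. is_ipred r y z) (S \<omega>) (a @ b) = i)"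
        by (auto simp: code_def nb True)
      show ?thesis unfolding eq
        apply (rule pred_Bex, simp)
        subgoal for b
          using pred_conj[OF pred_set_sub[OF H3, of b] F[where y="SOME z. is_ipred r y z" and a="a @ b", THEN spec[of _ i]]] by simp
        done
    next
      case False
      have eq: "(\<lambda>\<omega>. i \<in> code L r y (S \<omega>) a) = (\<lambda>\<omega>. \<exists>z\<in>below r y. phi_type L r z (S \<omega>) a = i)"
        by (auto simp: code_def nb False)
      show ?thesis unfolding eq
        by (rule pred_Bex, simp, rule F[THEN spec])
    qed
  qed
qed

lemma code_sub:
  assumes "is_struc L M" "sat M p (\<lambda>_. 0)" "set a \<subseteq> univ M"
  shows "code L r y M a \<subseteq> Xindex L r y p"
proof (cases "below r y = {}")
  case True then show ?thesis by (auto simp: code_def Xindex_def atoms_true_def)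
next
  case nb: False
  show ?thesis
  proof (cases "\<exists>z. is_ipred r y z")
    case True
    show ?thesis
    proof
      fix f assume "f \<in> code L r y M a"
      then obtain b where b: "set b \<subseteq> univ M" "f = phi_type L r (SOME z. is_ipred r y z) M (a @ b)"
        by (auto simp: code_def nb True)
      have "set (a @ b) \<subseteq> univ M" using b assms by auto
      then have "f \<in> Psi L r (SOME z. is_ipred r y z) p" using b assms
        unfolding Psi_def by blast
      then show "f \<in> Xindex L r y p" by (simp add: Xindex_def nb True)
    qed
  next
    case False
    show ?thesis
    proof
      fix f assume "f \<in> code L r y M a"
      then obtain z where z: "z \<in> below r y" "f = phi_type L r z M a"
        by (auto simp: code_def nb False)
      then show "f \<in> Xindex L r y p" using assms
        unfolding Xindex_def Psi_def by (auto simp: nb False)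
    qed
  qed
qed

lemma countable_Atoms: "countable (Atoms L)"
proof -
  have "atomic_L L \<subseteq> (\<lambda>(s,t). FEq s t) ` UNIV \<union> (\<lambda>(R,ts). FRel R ts) ` UNIV"
    unfolding atomic_L_def by auto
  then have c: "countable (atomic_L L)" by (rule countable_subset) auto
  then show ?thesis unfolding Atoms_def by auto
qed

lemma Atoms_qf: "q \<in> Atoms L \<Longrightarrow> qf_fin q \<and> wf_form L q"
  unfolding Atoms_def atomic_L_def by auto

lemma space_ModL_M: "space (ModL_M L) = ModL L"
  unfolding ModL_M_def by (rule space_measure_of) (auto simp: basic_open_def)

lemma space_Mod_phi_M: "space (Mod_phi_M L p) = Mod_phi L p"
  unfolding Mod_phi_M_def by (auto simp: space_restrict_space space_ModL_M Mod_phi_def)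

lemma pred_ModL_atom:
  assumes "q \<in> Atoms L" "fv q \<subseteq> {..<length a}"
  shows "Measurable.pred (Mod_phi_M L p) (\<lambda>M. sat_tuple M q a)"
proof -
  have "{M \<in> ModL L. sat_tuple M q a} \<in> basic_open L"
    using assms Atoms_qf[OF assms(1)] unfolding basic_open_def by blast
  then have A: "{M \<in> ModL L. sat_tuple M q a} \<in> sets (ModL_M L)"
    unfolding ModL_M_def
    by (subst sets_measure_of) (auto simp: basic_open_def intro: sigma_sets.Basic)
  have "{M \<in> space (Mod_phi_M L p). sat_tuple M q a} = Mod_phi L p \<inter> {M \<in> ModL L. sat_tuple M q a}"
    by (auto simp: space_Mod_phi_M Mod_phi_def)
  also have "\<dots> \<in> sets (Mod_phi_M L p)"
    unfolding Mod_phi_M_def sets_restrict_space using A by blast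
  finally show ?thesis by (simp add: pred_def)
qed

lemma pred_Mod_univ: "Measurable.pred (Mod_phi_M L p) (\<lambda>M. n \<in> univ M)"
proof -
  have "{M \<in> space (Mod_phi_M L p). n \<in> univ M} = space (Mod_phi_M L p)"
    by (auto simp: space_Mod_phi_M Mod_phi_def ModL_def)
  then show ?thesis by (simp add: pred_def)
qed

lemma part1:
  assumes WO: "Well_order r"
  shows "(\<lambda>(M, a). code L r x M a)
           \<in> measurable (Mod_phi_M L p \<Otimes>\<^sub>M count_space (UNIV :: nat list set)) (Xspace L r x p)"
  unfolding Xspace_def
proof (rule measurable_measure_of)
  show "{{S \<in> Pow (Xindex L r x p). i \<in> S} |i. i \<in> Xindex L r x p} \<subseteq> Pow (Pow (Xindex L r x p))"
    by auto
  show "(\<lambda>(M, a). code L r x M a) \<in> space (Mod_phi_M L p \<Otimes>\<^sub>M count_space UNIV) \<rightarrow> Pow (Xindex L r x p)"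
    using code_sub by (fastforce simp: space_pair_measure space_Mod_phi_M Mod_phi_def ModL_def)
  fix Y assume "Y \<in> {{S \<in> Pow (Xindex L r x p). i \<in> S} |i. i \<in> Xindex L r x p}"
  then obtain i where Y: "Y = {S \<in> Pow (Xindex L r x p). i \<in> S}" by blast
  have P: "\<And>a. Measurable.pred (Mod_phi_M L p) (\<lambda>M. i \<in> code L r x M a)"
    using codepred[OF WO countable_Atoms, where N="Mod_phi_M L p" and S="\<lambda>M. M"] pred_ModL_atom pred_Mod_univ by blast
  have "(\<lambda>(M, a). code L r x M a) -` Y \<inter> space (Mod_phi_M L p \<Otimes>\<^sub>M count_space UNIV)
      = (\<Union>a. {M \<in> space (Mod_phi_M L p). i \<in> code L r x M a} \<times> {a})"
    using code_sub unfolding Y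
    by (fastforce simp: space_pair_measure space_Mod_phi_M Mod_phi_def ModL_def)
  also have "\<dots> \<in> sets (Mod_phi_M L p \<Otimes>\<^sub>M count_space UNIV)"
    using P by (intro sets.countable_UN pair_measureI) (auto simp: pred_def)
  finally show "(\<lambda>(M, a). code L r x M a) -` Y \<inter> space (Mod_phi_M L p \<Otimes>\<^sub>M count_space UNIV)
      \<in> sets (Mod_phi_M L p \<Otimes>\<^sub>M count_space UNIV)" .
qed


section \<open>Baire coding\<close>

definition lst :: "(nat \<Rightarrow> nat) \<Rightarrow> nat list" where
  "lst z = from_nat (z 0)"
definition Uz :: "(nat \<Rightarrow> nat) \<Rightarrow> nat set" where
  "Uz z = {n. z (prod_encode (1, n)) \<noteq> 0}"
definition kf :: "nat \<Rightarrow> nat list \<Rightarrow> nat" where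
  "kf f xs = prod_encode (2, to_nat (f, xs))"
definition kr :: "nat \<Rightarrow> nat list \<Rightarrow> nat" where
  "kr R xs = prod_encode (3, to_nat (R, xs))"
definition dec :: "lang \<Rightarrow> (nat \<Rightarrow> nat) \<Rightarrow> struc" where
  "dec L z = \<lparr>univ = Uz z,
     fint = (\<lambda>f xs. if fsym L f = Some (length xs) \<and> set xs \<subseteq> Uz z then z (kf f xs) else 0),
     rint = (\<lambda>R xs. rsym L R = Some (length xs) \<and> set xs \<subseteq> Uz z \<and> z (kr R xs) \<noteq> 0)\<rparr>"

lemma coord_meas: "(\<lambda>z. z k) \<in> baire \<rightarrow>\<^sub>M count_space UNIV"
  unfolding baire_def by (rule measurable_component_singleton) simp

lemma pred_compose_countable:
  assumes "g \<in> M \<rightarrow>\<^sub>M count_space (UNIV :: 'a :: countable set)" "\<And>j. Measurable.pred M (Q j)"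
  shows "Measurable.pred M (\<lambda>x. Q (g x) x)"
proof -
  have "{x \<in> space M. Q (g x) x} = (\<Union>j. {x \<in> space M. g x = j} \<inter> {x \<in> space M. Q j x})" by auto
  also have "\<dots> \<in> sets M"
    using assms pred_count_space_const1[OF assms(1)] by (intro sets.countable_UN sets.Int) (auto simp: pred_def)
  finally show ?thesis by (simp add: pred_def)
qed

lemma pred_eq_meas:
  assumes "f \<in> M \<rightarrow>\<^sub>M count_space (UNIV :: 'a :: countable set)" "g \<in> M \<rightarrow>\<^sub>M count_space (UNIV :: 'a set)"
  shows "Measurable.pred M (\<lambda>x. f x = g x)"
  by (rule pred_compose_countable[OF assms(1)]) (rule pred_count_space_const2[OF assms(2)])

lemma pred_Uz: "Measurable.pred baire (\<lambda>z. n \<in> Uz z)"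
proof -
  have "Measurable.pred baire (\<lambda>z. \<not> (z (prod_encode (1, n)) = 0))"
    by (rule pred_intros_logic(2), rule pred_count_space_const1[OF coord_meas])
  then show ?thesis by (simp add: Uz_def)
qed

lemma pred_Uz_meas:
  assumes "g \<in> baire \<rightarrow>\<^sub>M count_space (UNIV :: nat set)"
  shows "Measurable.pred baire (\<lambda>z. g z \<in> Uz z)"
  by (rule pred_compose_countable[OF assms]) (rule pred_Uz)

lemma meas_map:
  assumes "\<And>t. t \<in> set ts \<Longrightarrow> g t \<in> M \<rightarrow>\<^sub>M count_space (UNIV :: 'a :: countable set)"
  shows "(\<lambda>z. map (\<lambda>t. g t z) ts) \<in> M \<rightarrow>\<^sub>M count_space UNIV"
  using assms
proof (induction ts)
  case Nil then show ?case by simp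
next
  case (Cons t ts)
  have R: "(\<lambda>z. map (\<lambda>t. g t z) ts) \<in> M \<rightarrow>\<^sub>M count_space UNIV" using Cons by simp
  have "(\<lambda>z. (\<lambda>i z. i # map (\<lambda>t. g t z) ts) (g t z) z) \<in> M \<rightarrow>\<^sub>M count_space UNIV"
  proof (rule measurable_compose_countable[where f="\<lambda>i z. i # map (\<lambda>t. g t z) ts" and g="g t"])
    fix i
    show "(\<lambda>z. i # map (\<lambda>t. g t z) ts) \<in> M \<rightarrow>\<^sub>M count_space UNIV"
      by (rule measurable_compose[OF R]) simp
  next
    show "g t \<in> M \<rightarrow>\<^sub>M count_space UNIV" using Cons by simp
  qed
  then show ?case by simp
qed

lemma pred_set_sub_Uz:
  assumes "l \<in> baire \<rightarrow>\<^sub>M count_space (UNIV :: nat list set)"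
  shows "Measurable.pred baire (\<lambda>z. set (l z) \<subseteq> Uz z)"
  using pred_compose_countable[OF assms, of "\<lambda>xs z. set xs \<subseteq> Uz z"] pred_set_sub[OF pred_Uz] by simp

lemma meas_eval: "(\<lambda>z. eval (dec L z) v t) \<in> baire \<rightarrow>\<^sub>M count_space UNIV"
proof (induction t)
  case (Var i) then show ?case by simp
next
  case (App f ts)
  define m where "m = (\<lambda>z. map (\<lambda>t. eval (dec L z) v t) ts)"
  have m: "m \<in> baire \<rightarrow>\<^sub>M count_space UNIV" unfolding m_def
    by (rule meas_map[where g="\<lambda>t z. eval (dec L z) v t"]) (rule App)
  have "(\<lambda>z. (\<lambda>l z. if fsym L f = Some (length l) \<and> set l \<subseteq> Uz z then z (kf f l) else 0) (m z) z)
      \<in> baire \<rightarrow>\<^sub>M count_space UNIV"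
  proof (rule measurable_compose_countable[OF _ m])
    fix l :: "nat list"
    show "(\<lambda>z. if fsym L f = Some (length l) \<and> set l \<subseteq> Uz z then z (kf f l) else 0) \<in> baire \<rightarrow>\<^sub>M count_space UNIV"
      apply (rule measurable_If[OF coord_meas])
       apply simp
      apply (fold pred_def)
      apply (rule pred_conj_const)
      apply (rule pred_set_sub[OF pred_Uz])
      done
  qed
  moreover have "\<And>z. eval (dec L z) v (App f ts) = (if fsym L f = Some (length (m z)) \<and> set (m z) \<subseteq> Uz z then z (kf f (m z)) else 0)"
    unfolding m_def by (simp add: dec_def)
  ultimately show ?case by simp
qed

lemma pred_sat: "Measurable.pred baire (\<lambda>z. sat (dec L z) q v)"
proof (induction q arbitrary: v)
  case (FEq s t)
  then show ?case by (simp, rule pred_eq_meas[OF meas_eval meas_eval])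
next
  case (FRel R ts)
  define m where "m = (\<lambda>z. map (\<lambda>t. eval (dec L z) v t) ts)"
  have m: "m \<in> baire \<rightarrow>\<^sub>M count_space UNIV" unfolding m_def
    by (rule meas_map[where g="\<lambda>t z. eval (dec L z) v t"]) (rule meas_eval)
  have "Measurable.pred baire (\<lambda>z. (\<lambda>l z. rsym L R = Some (length l) \<and> set l \<subseteq> Uz z \<and> z (kr R l) \<noteq> 0) (m z) z)"
  proof (rule pred_compose_countable[OF m])
    fix l :: "nat list"
    show "Measurable.pred baire (\<lambda>z. rsym L R = Some (length l) \<and> set l \<subseteq> Uz z \<and> z (kr R l) \<noteq> 0)"
      apply (rule pred_conj_const)
      apply (rule pred_conj)
       apply (rule pred_set_sub[OF pred_Uz])
      apply (rule pred_intros_logic(2), rule pred_count_space_const1[OF coord_meas])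
      done
  qed
  moreover have "\<And>z. sat (dec L z) (FRel R ts) v = (rsym L R = Some (length (m z)) \<and> set (m z) \<subseteq> Uz z \<and> z (kr R (m z)) \<noteq> 0)"
    unfolding m_def by (simp add: dec_def)
  ultimately show ?case by simp
next
  case (FNeg q)
  then show ?case by (simp add: pred_intros_logic(2))
next
  case (FConj S)
  have "(\<lambda>z. sat (dec L z) (FConj S) v) = (\<lambda>z. \<forall>q\<in>rcset S. sat (dec L z) q v)"
    by (simp add: cimage.rep_eq)
  moreover have "Measurable.pred baire (\<lambda>z. \<forall>q\<in>rcset S. sat (dec L z) q v)"
    by (rule pred_Ball) (use rcset[of S] FConj in auto)
  ultimately show ?case by simp
next
  case (FDisj S)
  have "(\<lambda>z. sat (dec L z) (FDisj S) v) = (\<lambda>z. \<exists>q\<in>rcset S. sat (dec L z) q v)"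
    by (simp add: cimage.rep_eq)
  moreover have "Measurable.pred baire (\<lambda>z. \<exists>q\<in>rcset S. sat (dec L z) q v)"
    by (rule pred_Bex) (use rcset[of S] FDisj in auto)
  ultimately show ?case by simp
next
  case (FEx i q)
  have "(\<lambda>z. sat (dec L z) (FEx i q) v) = (\<lambda>z. \<exists>u\<in>UNIV. u \<in> Uz z \<and> sat (dec L z) q (v(i := u)))"
    by (auto simp: dec_def)
  moreover have "Measurable.pred baire (\<lambda>z. \<exists>u\<in>UNIV. u \<in> Uz z \<and> sat (dec L z) q (v(i := u)))"
    by (rule pred_Bex, simp, rule pred_conj[OF pred_Uz FEx])
  ultimately show ?case by simp
next
  case (FAll i q)
  have "(\<lambda>z. sat (dec L z) (FAll i q) v) = (\<lambda>z. \<forall>u\<in>UNIV. u \<in> Uz z \<longrightarrow> sat (dec L z) q (v(i := u)))"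
    by (auto simp: dec_def)
  moreover have "Measurable.pred baire (\<lambda>z. \<forall>u\<in>UNIV. u \<in> Uz z \<longrightarrow> sat (dec L z) q (v(i := u)))"
    by (rule pred_Ball, simp, rule pred_imp[OF pred_Uz FAll])
  ultimately show ?case by simp
qed


lemma space_baire: "space baire = UNIV"
  unfolding baire_def space_PiM by auto

lemma lst_meas: "lst \<in> baire \<rightarrow>\<^sub>M count_space UNIV"
proof -
  have "(\<lambda>z. from_nat (z 0) :: nat list) \<in> baire \<rightarrow>\<^sub>M count_space UNIV"
    by (rule measurable_compose[OF coord_meas]) simp
  then show ?thesis by (simp add: lst_def[abs_def])
qed

lemma univ_dec[simp]: "univ (dec L z) = Uz z"
  by (simp add: dec_def)

lemma is_struc_dec: "is_struc L (dec L z) \<longleftrightarrow>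
   (\<exists>n\<in>UNIV. n \<in> Uz z) \<and> (\<forall>f\<in>UNIV. \<forall>xs\<in>UNIV. (fsym L f = Some (length xs) \<and> set xs \<subseteq> Uz z) \<longrightarrow> z (kf f xs) \<in> Uz z)"
  by (auto simp: is_struc_def dec_def)

lemma pred_is_struc: "Measurable.pred baire (\<lambda>z. is_struc L (dec L z))"
  unfolding is_struc_dec
  apply (rule pred_conj)
   apply (rule pred_Bex, simp, rule pred_Uz)
  apply (rule pred_Ball, simp)
  apply (rule pred_Ball, simp)
  apply (rule pred_imp)
   apply (rule pred_conj_const, rule pred_set_sub[OF pred_Uz])
  apply (rule pred_Uz_meas[OF coord_meas])
  done

lemma pred_D: "Measurable.pred baire (\<lambda>z. is_struc L (dec L z) \<and> sat (dec L z) p (\<lambda>_. 0) \<and> set (lst z) \<subseteq> Uz z)"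
  by (rule pred_conj[OF pred_is_struc pred_conj[OF pred_sat pred_set_sub_Uz[OF lst_meas]]])

lemma pred_code_baire:
  assumes WO: "Well_order r"
  shows "Measurable.pred baire (\<lambda>z. i \<in> code L r x (dec L z) a)"
proof (rule codepred[OF WO countable_Atoms, where N=baire and S="dec L"])
  fix q a show "Measurable.pred baire (\<lambda>z. sat_tuple (dec L z) q a)"
    unfolding sat_tuple_def by (rule pred_sat)
next
  fix n show "Measurable.pred baire (\<lambda>z. n \<in> univ (dec L z))"
    by (simp add: pred_Uz)
qed

definition enc :: "struc \<Rightarrow> nat list \<Rightarrow> nat \<Rightarrow> nat" where
  "enc M a k = (if k = 0 then to_nat a else
     (case prod_decode k of (t, m) \<Rightarrow>
        if t = 1 then (if m \<in> univ M then 1 else 0)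
        else if t = 2 then fint M (fst (from_nat m :: nat \<times> nat list)) (snd (from_nat m :: nat \<times> nat list))
        else if t = 3 then (if rint M (fst (from_nat m :: nat \<times> nat list)) (snd (from_nat m :: nat \<times> nat list)) then 1 else 0)
        else 0))"

lemma prod_encode_nz: "t \<noteq> 0 \<Longrightarrow> prod_encode (t, m) \<noteq> 0"
  by (simp add: prod_encode_def)

lemma enc_U: "Uz (enc M a) = univ M"
  by (auto simp: Uz_def enc_def prod_encode_nz prod_encode_inverse split: if_splits)

lemma enc_lst: "lst (enc M a) = a"
  by (simp add: lst_def enc_def)

lemma enc_kf: "enc M a (kf f xs) = fint M f xs"
  by (simp add: kf_def enc_def prod_encode_nz prod_encode_inverse)

lemma enc_kr: "(enc M a (kr R xs) \<noteq> 0) = rint M R xs"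
  by (simp add: kr_def enc_def prod_encode_nz prod_encode_inverse)

lemma dec_enc:
  assumes "is_struc L M"
  shows "dec L (enc M a) = M"
proof (rule struc.equality)
  show "univ (dec L (enc M a)) = univ M" by (simp add: enc_U)
  show "fint (dec L (enc M a)) = fint M"
  proof (intro ext)
    fix f xs
    have "fint (dec L (enc M a)) f xs = (if fsym L f = Some (length xs) \<and> set xs \<subseteq> univ M then fint M f xs else 0)"
      by (simp add: dec_def enc_U enc_kf)
    then show "fint (dec L (enc M a)) f xs = fint M f xs" using assms unfolding is_struc_def by auto
  qed
  show "rint (dec L (enc M a)) = rint M"
  proof (intro ext)
    fix R xs
    have "rint (dec L (enc M a)) R xs = (rsym L R = Some (length xs) \<and> set xs \<subseteq> univ M \<and> rint M R xs)"
      using enc_kr[of M a R xs] by (simp add: dec_def enc_U)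
    moreover have "\<not> (rsym L R = Some (length xs) \<and> set xs \<subseteq> univ M) \<longrightarrow> \<not> rint M R xs"
      using assms unfolding is_struc_def by blast
    ultimately show "rint (dec L (enc M a)) R xs = rint M R xs" by blast
  qed
qed (simp add: dec_def)

lemma analytic_image:
  assumes I: "countable I" and D: "D \<in> sets baire" and sub: "\<And>z. z \<in> D \<Longrightarrow> f z \<subseteq> I"
    and P: "\<And>i. i \<in> I \<Longrightarrow> {z \<in> D. i \<in> f z} \<in> sets baire"
  shows "analytic (sigma (Pow I) {{S \<in> Pow I. i \<in> S} |i. i \<in> I}) (f ` D)"
proof -
  let ?X = "sigma (Pow I) {{S \<in> Pow I. i \<in> S} |i. i \<in> I}"
  have gen: "{{S \<in> Pow I. i \<in> S} |i. i \<in> I} \<subseteq> Pow (Pow I)" by auto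
  have spX: "space ?X = Pow I" using space_measure_of[OF gen] .
  have G: "\<And>i. i \<in> I \<Longrightarrow> {S \<in> Pow I. i \<in> S} \<in> sets ?X"
    by (subst sets_measure_of[OF gen]) (auto intro: sigma_sets.Basic)
  have Gc: "\<And>i. i \<in> I \<Longrightarrow> {S \<in> Pow I. i \<notin> S} \<in> sets ?X"
  proof -
    fix i assume "i \<in> I"
    have "{S \<in> Pow I. i \<notin> S} = space ?X - {S \<in> Pow I. i \<in> S}" using spX by auto
    then show "{S \<in> Pow I. i \<notin> S} \<in> sets ?X" using G[OF \<open>i \<in> I\<close>] by simp
  qed
  define B where "B = {(S, z). z \<in> D \<and> S = f z}"
  have fstB: "fst ` B = f ` D" unfolding B_def by force
  have PD: "Pow I \<times> D \<in> sets (?X \<Otimes>\<^sub>M baire)"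
  proof -
    have "Pow I \<in> sets ?X" using sets.top[of ?X] spX by simp
    then show ?thesis using pair_measureI[OF _ D] by blast
  qed
  have B_eq: "B = (Pow I \<times> D) \<inter> (\<Inter>i\<in>I. ({S \<in> Pow I. i \<in> S} \<times> {z \<in> D. i \<in> f z}) \<union> ({S \<in> Pow I. i \<notin> S} \<times> (D - {z \<in> D. i \<in> f z})))"
  proof (rule set_eqI)
    fix w :: "'a set \<times> (nat \<Rightarrow> nat)"
    obtain S z where w: "w = (S, z)" by (cases w)
    show "w \<in> B \<longleftrightarrow> w \<in> (Pow I \<times> D) \<inter> (\<Inter>i\<in>I. ({S \<in> Pow I. i \<in> S} \<times> {z \<in> D. i \<in> f z}) \<union> ({S \<in> Pow I. i \<notin> S} \<times> (D - {z \<in> D. i \<in> f z})))"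
    proof
      assume "w \<in> B"
      then show "w \<in> (Pow I \<times> D) \<inter> (\<Inter>i\<in>I. ({S \<in> Pow I. i \<in> S} \<times> {z \<in> D. i \<in> f z}) \<union> ({S \<in> Pow I. i \<notin> S} \<times> (D - {z \<in> D. i \<in> f z})))"
        using sub unfolding B_def w by auto
    next
      assume H: "w \<in> (Pow I \<times> D) \<inter> (\<Inter>i\<in>I. ({S \<in> Pow I. i \<in> S} \<times> {z \<in> D. i \<in> f z}) \<union> ({S \<in> Pow I. i \<notin> S} \<times> (D - {z \<in> D. i \<in> f z})))"
      then have SI: "S \<subseteq> I" and zD: "z \<in> D" unfolding w by auto
      have "\<And>i. i \<in> I \<Longrightarrow> (i \<in> S \<longleftrightarrow> i \<in> f z)" using H unfolding w by blast
      then have "S = f z" using SI sub[OF zD] by blast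
      then show "w \<in> B" unfolding B_def w using zD by simp
    qed
  qed
  have "B \<in> sets (?X \<Otimes>\<^sub>M baire)"
  proof (cases "I = {}")
    case True
    then have "B = Pow I \<times> D" unfolding B_eq by simp
    then show ?thesis using PD by simp
  next
    case False
    have "(\<Inter>i\<in>I. ({S \<in> Pow I. i \<in> S} \<times> {z \<in> D. i \<in> f z}) \<union> ({S \<in> Pow I. i \<notin> S} \<times> (D - {z \<in> D. i \<in> f z}))) \<in> sets (?X \<Otimes>\<^sub>M baire)"
      using False I G Gc P D by (intro sets.countable_INT' sets.Un pair_measureI sets.Diff) auto
    then show ?thesis unfolding B_eq using PD by simp
  qed
  moreover have "f ` D \<subseteq> space ?X" using sub spX by auto
  ultimately show ?thesis unfolding analytic_def using fstB by blast
qed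

lemma countable_Xindex:
  assumes "\<forall>y\<in>below r x. countable (Psi L r y p)"
  shows "countable (Xindex L r x p)"
proof (cases "below r x = {}")
  case True then show ?thesis by (simp add: Xindex_def countable_Atoms)
next
  case nb: False
  show ?thesis
  proof (cases "\<exists>z. is_ipred r x z")
    case True
    then have "(SOME z. is_ipred r x z) \<in> below r x" by (metis is_ipred_def someI)
    then show ?thesis using assms by (simp add: Xindex_def nb True)
  next
    case False
    then show ?thesis using assms by (simp add: Xindex_def nb False)
  qed
qed

lemma part2:
  assumes WO: "Well_order r" and C: "\<forall>y\<in>below r x. countable (Psi L r y p)"
  shows "analytic (Xspace L r x p) (PsiX L r x p)"
proof -
  define D where "D = {z. is_struc L (dec L z) \<and> sat (dec L z) p (\<lambda>_. 0) \<and> set (lst z) \<subseteq> Uz z}"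
  define f where "f = (\<lambda>z. code L r x (dec L z) (lst z))"
  have Dm: "D \<in> sets baire" using pred_D[of L p] unfolding D_def pred_def space_baire by simp
  have eq: "PsiX L r x p = f ` D"
  proof
    show "PsiX L r x p \<subseteq> f ` D"
    proof
      fix c assume "c \<in> PsiX L r x p"
      then obtain M a where Ma: "c = code L r x M a" "is_struc L M" "sat M p (\<lambda>_. 0)" "set a \<subseteq> univ M"
        unfolding PsiX_def by blast
      have "enc M a \<in> D" using Ma by (simp add: D_def dec_enc enc_lst enc_U)
      moreover have "f (enc M a) = c" using Ma by (simp add: f_def dec_enc enc_lst)
      ultimately show "c \<in> f ` D" by (metis image_eqI)
    qed
    show "f ` D \<subseteq> PsiX L r x p"
      unfolding D_def f_def PsiX_def by force
  qed
  show ?thesis unfolding eq Xspace_def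
  proof (rule analytic_image[OF countable_Xindex[OF C] Dm])
    fix z assume "z \<in> D" then show "f z \<subseteq> Xindex L r x p"
      unfolding D_def f_def by (auto intro!: code_sub[THEN subsetD])
  next
    fix i
    have "Measurable.pred baire (\<lambda>z. (is_struc L (dec L z) \<and> sat (dec L z) p (\<lambda>_. 0) \<and> set (lst z) \<subseteq> Uz z) \<and> i \<in> f z)"
      unfolding f_def
      by (rule pred_conj[OF pred_D pred_compose_countable[OF lst_meas, where Q="\<lambda>a z. i \<in> code L r x (dec L z) a"]])
        (rule pred_code_baire[OF WO])
    then show "{z \<in> D. i \<in> f z} \<in> sets baire"
      unfolding pred_def space_baire D_def by simp
  qed
qed

lemma part3:
  assumes WO: "Well_order r" and C: "\<forall>y\<in>below r x. countable (Psi L r y p)"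
  shows "analytic (Xspace L r x p) (PhiX L r x p)"
proof -
  define D where "D = {z. is_struc L (dec L z) \<and> sat (dec L z) p (\<lambda>_. 0)}"
  define f where "f = (\<lambda>z. code L r x (dec L z) [])"
  have "Measurable.pred baire (\<lambda>z. is_struc L (dec L z) \<and> sat (dec L z) p (\<lambda>_. 0))"
    by (rule pred_conj[OF pred_is_struc pred_sat])
  then have Dm: "D \<in> sets baire" unfolding D_def pred_def space_baire by simp
  have eq: "PhiX L r x p = f ` D"
  proof
    show "PhiX L r x p \<subseteq> f ` D"
    proof
      fix c assume "c \<in> PhiX L r x p"
      then obtain M where Ma: "c = code L r x M []" "is_struc L M" "sat M p (\<lambda>_. 0)"
        unfolding PhiX_def by blast
      have "enc M [] \<in> D" using Ma by (simp add: D_def dec_enc)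
      moreover have "f (enc M []) = c" using Ma by (simp add: f_def dec_enc)
      ultimately show "c \<in> f ` D" by (metis image_eqI)
    qed
    show "f ` D \<subseteq> PhiX L r x p"
      unfolding D_def f_def PhiX_def by force
  qed
  show ?thesis unfolding eq Xspace_def
  proof (rule analytic_image[OF countable_Xindex[OF C] Dm])
    fix z assume "z \<in> D" then show "f z \<subseteq> Xindex L r x p"
      unfolding D_def f_def by (auto intro!: code_sub[THEN subsetD])
  next
    fix i
    have "Measurable.pred baire (\<lambda>z. (is_struc L (dec L z) \<and> sat (dec L z) p (\<lambda>_. 0)) \<and> i \<in> f z)"
      unfolding f_def
      by (rule pred_conj[OF pred_conj[OF pred_is_struc pred_sat] pred_code_baire[OF WO]])
    then show "{z \<in> D. i \<in> f z} \<in> sets baire"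
      unfolding pred_def space_baire D_def by simp
  qed
qed

theorem lemma13:
  fixes L :: lang and p :: form and r :: "nat rel" and x :: nat
  assumes "is_sentence L p"
    and "Well_order r" and "x \<in> Field r"
    and "\<forall>y\<in>below r x. countable (Psi L r y p)"
  shows "(\<lambda>(M, a). code L r x M a)
           \<in> measurable (Mod_phi_M L p \<Otimes>\<^sub>M count_space (UNIV :: nat list set)) (Xspace L r x p)
         \<and> analytic (Xspace L r x p) (PsiX L r x p)
         \<and> analytic (Xspace L r x p) (PhiX L r x p)"
  using part1[OF assms(2)] part2[OF assms(2,4)] part3[OF assms(2,4)] by blast

end
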